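(* Let $\mathcal{B}_4$, $\pi_{\lambda,\mu}$ ($\lambda\neq0,\mu\in\mathbb{R}$), the group Fourier transform $\pi_{\lambda,\mu}(\kappa)=\hat\kappa(\pi_{\lambda,\mu})$ and the difference operators $\Delta_{x_i}$ be as in the context. Then for suitable distributions $\kappa$ on $\mathcal{B}_4$ (e.g. $\kappa\in\mathcal{S}(\mathbb{R}^4)$), $$\Delta_{x_1}\hat\kappa(\pi_{\lambda,\mu})=\frac{i}{\lambda}\Big(\pi_{\lambda,\mu}(X_3)\pi_{\lambda,\mu}(\kappa)-\pi_{\lambda,\mu}(\kappa)\pi_{\lambda,\mu}(X_3)\Big),$$ where $\pi_{\lambda,\mu}(X_3)$ is the operator of multiplication by $-i\lambda u$, and $$\Delta_{x_2}\hat\kappa(\pi_{\lambda,\mu})=\frac{2\lambda}{i}\,\partial_\mu\,\pi_{\lambda,\mu}(\kappa).$$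
   Context: The Engel group $\mathcal{B}_4$ is $\mathbb{R}^4$ with the law $(x_1,x_2,x_3,x_4)\circ(y_1,y_2,y_3,y_4)=(x_1+y_1,x_2+y_2,x_3+y_3-x_1y_2,x_4+y_4+\frac12x_1^2y_2-x_1y_3)$ and Haar measure the Lebesgue measure. Its left-invariant vector fields are $X_1=\partial_{x_1}$, $X_2=\partial_{x_2}-x_1\partial_{x_3}+\frac{x_1^2}{2}\partial_{x_4}$, $X_3=\partial_{x_3}-x_1\partial_{x_4}$, $X_4=\partial_{x_4}$. For $\lambda\neq0$, $\mu\in\mathbb{R}$, $\pi_{\lambda,\mu}(x)h(u)=\exp\big(i(-\frac{\mu}{2\lambda}x_2+\lambda x_4-\lambda x_3u+\frac{\lambda}{2}x_2u^2)\big)h(u+x_1)$ on $L^2(\mathbb{R})$. The group Fourier transform is $\hat\kappa(\pi_{\lambda,\mu})=\pi_{\lambda,\mu}(\kappa)=\int_{\mathcal{B}_4}\kappa(x)\pi_{\lambda,\mu}(x)^*dx$; explicitly $\pi_{\lambda,\mu}(\kappa)h(u)=\int_{\mathbb{R}^4}\kappa(x)\exp\big(i(\frac{\mu}{2\lambda}x_2-\lambda x_4+\lambda x_3(u-x_1)-\frac{\lambda}{2}x_2(u-x_1)^2)\big)h(u-x_1)\,dx$. The same symbol $\pi_{\lambda,\mu}$ denotes the infinitesimal representation: $\pi_{\lambda,\mu}(X_1)=\partial_u$, $\pi_{\lambda,\mu}(X_2)=\frac{i}{2}(\lambda u^2-\frac{\mu}{\lambda})$, $\pi_{\lambda,\mu}(X_3)=-i\lambda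 u$, $\pi_{\lambda,\mu}(X_4)=i\lambda$ (multiplication operators except the first). The difference operators are defined by $\Delta_{x_i}\hat\kappa(\pi_{\lambda,\mu}):=\pi_{\lambda,\mu}(x_i\kappa)$, $i=1,\dots,4$, where $x_i\kappa$ is $\kappa$ multiplied by the coordinate function $x_i$. $\partial_\mu\pi_{\lambda,\mu}(\kappa)$ denotes the derivative in the parameter $\mu$ of the operator family (applied pointwise to $\pi_{\lambda,\mu}(\kappa)h(u)$). *)

theory Defs
  imports "HOL-Analysis.Analysis"
begin

definition partial_deriv :: "'n::finite \<Rightarrow> (real^'n \<Rightarrow> complex) \<Rightarrow> real^'n \<Rightarrow> complex" where
  "partial_deriv i f x = vector_derivative (\<lambda>t. f (x + t *\<^sub>R axis i 1)) (at 0)"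

fun iter_partial :: "'n::finite list \<Rightarrow> (real^'n \<Rightarrow> complex) \<Rightarrow> real^'n \<Rightarrow> complex" where
  "iter_partial [] f = f"
| "iter_partial (i # is) f = partial_deriv i (iter_partial is f)"

definition schwartz :: "(real^'n::finite \<Rightarrow> complex) \<Rightarrow> bool" where
  "schwartz f \<longleftrightarrow>
     (\<forall>is x. iter_partial is f differentiable (at x)) \<and>
     (\<forall>is (n::nat). \<exists>C. \<forall>x. (1 + norm x) ^ n * norm (iter_partial is f x) \<le> C)"

text \<open>Group Fourier transform pi_{lam,mu}(kappa) of the Engel group B_4 applied to h, evaluated at u.\<close>
definition piK :: "real \<Rightarrow> real \<Rightarrow> (real^4 \<Rightarrow> complex) \<Rightarrow> (real \<Rightarrow> complex) \<Rightarrow> real \<Rightarrow> complex" where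
  "piK lam mu k h u =
     (\<integral>x. k x * exp (\<i> * complex_of_real
                (mu / (2 * lam) * x$2 - lam * x$4 + lam * x$3 * (u - x$1)
                 - lam / 2 * x$2 * (u - x$1)^2))
            * h (u - x$1) \<partial>lborel)"

definition pi_X3 :: "real \<Rightarrow> (real \<Rightarrow> complex) \<Rightarrow> real \<Rightarrow> complex" where
  "pi_X3 lam h = (\<lambda>v. - \<i> * complex_of_real lam * complex_of_real v * h v)"

end

theory Submission imports Defs "HOL-Probability.Characteristic_Functions" "HOL-Probability.Sinc_Integral" begin


lemma hvd_iff:
  fixes f :: "real \<Rightarrow> complex"
  shows "(f has_vector_derivative D) (at x) \<longleftrightarrow> ((\<lambda>y. (f y - f x) / of_real (y - x)) \<longlongrightarrow> D) (at x)"
proof -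
  have eq: "norm (f y - f x - (y - x) *\<^sub>R D) / \<bar>y - x\<bar> = norm ((f y - f x) / of_real (y - x) - D)" if "y \<noteq> x" for y
  proof -
    have "(f y - f x) / of_real (y - x) - D = (f y - f x - (y - x) *\<^sub>R D) / of_real (y - x)"
      using that by (simp add: field_simps scaleR_conv_of_real)
    then show ?thesis by (simp add: norm_divide del: of_real_diff)
  qed
  have "(f has_vector_derivative D) (at x) \<longleftrightarrow> ((\<lambda>y. norm (f y - f x - (y - x) *\<^sub>R D) / norm (y - x)) \<longlongrightarrow> 0) (at x)"
    unfolding has_vector_derivative_def has_derivative_iff_norm
    by (simp add: bounded_linear_scaleR_left)
  also have "\<dots> \<longleftrightarrow> ((\<lambda>y. norm ((f y - f x) / of_real (y - x) - D)) \<longlongrightarrow> 0) (at x)"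
    by (intro filterlim_cong refl) (auto simp: eventually_at_filter eq simp del: of_real_diff)
  also have "\<dots> \<longleftrightarrow> ((\<lambda>y. (f y - f x) / of_real (y - x)) \<longlongrightarrow> D) (at x)"
    by (simp add: tendsto_norm_zero_iff LIM_zero_iff)
  finally show ?thesis .
qed

lemma int_w: "integrable lborel (\<lambda>x::real. inverse (1 + x^2))"
  using integrable_inverse_1_plus_square by (simp add: set_integrable_def einterval_eq_UNIV)

lemma iexp_le: "cmod (iexp x - 1) \<le> \<bar>x\<bar>"
  using iexp_approx1[of x 0] by simp

lemma nn_w_fin: "(\<integral>\<^sup>+t. ennreal (inverse (1 + t^2)) \<partial>lborel) < \<infinity>"
  using int_w unfolding integrable_iff_bounded by simp

lemma nn_h_fin:
  fixes h :: "real \<Rightarrow> complex"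
  assumes h[measurable]: "h \<in> borel_measurable lborel"
    and h2: "integrable lborel (\<lambda>v. (norm (h v))^2)"
  shows "(\<integral>\<^sup>+t. ennreal (inverse (1 + t^2) * (norm (h (u - t)))^2) \<partial>lborel) < \<infinity>"
proof -
  have hb[measurable]: "h \<in> borel_measurable borel" using h by simp
  have "(\<integral>\<^sup>+t. ennreal (inverse (1 + t^2) * (norm (h (u - t)))^2) \<partial>lborel)
      \<le> (\<integral>\<^sup>+t. ennreal ((norm (h (u + (-1) * t)))^2) \<partial>lborel)"
  proof (intro nn_integral_mono ennreal_leI)
    fix t :: real
    have "inverse (1 + t^2) \<le> 1" by (simp add: inverse_le_1_iff)
    then show "inverse (1 + t^2) * (norm (h (u - t)))^2 \<le> (norm (h (u + (-1) * t)))^2"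
      by (simp add: mult_left_le_one_le)
  qed
  also have "\<dots> = (\<integral>\<^sup>+t. ennreal ((norm (h t))^2) \<partial>lborel)"
    by (subst nn_integral_real_affine[where c="-1" and t=u]) simp_all
  also have "\<dots> < \<infinity>" using h2 unfolding integrable_iff_bounded by simp
  finally show ?thesis .
qed

lemma le_sq: "(a::real) \<le> 1 + a^2"
proof -
  have "0 \<le> (a - 1/2)^2" by simp
  then show ?thesis by (simp add: power2_eq_square algebra_simps)
qed

lemma integrable_weighted:
  fixes P :: "'a::euclidean_space \<Rightarrow> complex" and h :: "real \<Rightarrow> complex"
  assumes P[measurable]: "P \<in> borel_measurable borel"
    and Pb: "\<And>x. norm (P x) \<le> C * (\<Prod>b\<in>Basis. inverse (1 + (x \<bullet> b)^2))"
    and h[measurable]: "h \<in> borel_measurable lborel"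
    and h2: "integrable lborel (\<lambda>v. (norm (h v))^2)"
    and b0: "b0 \<in> Basis"
  shows "integrable lborel (\<lambda>x. P x * h (u - x \<bullet> b0))"
proof -
  have hb[measurable]: "h \<in> borel_measurable borel" using h by simp
  define w where "w t = inverse (1 + t^2)" for t :: real
  have w_pos: "0 < w t" for t unfolding w_def by (simp add: add_pos_nonneg)
  have w_meas[measurable]: "w \<in> borel_measurable borel" unfolding w_def by measurable
  define W where "W x = (\<Prod>b\<in>Basis. w (x \<bullet> b))" for x :: 'a
  have W_pos: "0 < W x" for x unfolding W_def by (intro prod_pos) (simp add: w_pos)
  have C0: "0 \<le> C"
  proof -
    have "0 \<le> C * W 0" using Pb[of 0] norm_ge_zero[of "P 0"] unfolding W_def w_def by linarith
    then show ?thesis using W_pos[of 0] by (simp add: zero_le_mult_iff)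
  qed
  define f1 where "f1 b t = ennreal (w t)" for b :: 'a and t
  define f2 where "f2 b t = (if b = b0 then ennreal (w t * (norm (h (u - t)))^2) else ennreal (w t))" for b :: 'a and t
  have m1: "f1 b \<in> borel_measurable borel" for b unfolding f1_def by measurable
  have m2: "f2 b \<in> borel_measurable borel" for b unfolding f2_def by measurable
  have fin1: "(\<integral>\<^sup>+t. f1 b t \<partial>lborel) \<noteq> top" for b
    using nn_w_fin unfolding f1_def w_def by (simp add: less_top)
  have fin2: "(\<integral>\<^sup>+t. f2 b t \<partial>lborel) \<noteq> top" for b
    using nn_w_fin nn_h_fin[OF h h2, of u] unfolding f2_def w_def by (cases "b = b0") (simp_all add: less_top)
  have I1: "(\<integral>\<^sup>+x. (\<Prod>b\<in>Basis. f1 b (x \<bullet> b)) \<partial>lborel) < \<infinity>"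
  proof -
    have "(\<integral>\<^sup>+x. (\<Prod>b\<in>Basis. f1 b (x \<bullet> b)) \<partial>lborel) = (\<Prod>b\<in>Basis. (\<integral>\<^sup>+t. f1 b t \<partial>lborel))"
      by (rule nn_integral_lborel_prod[OF m1]) (simp add: f1_def)
    moreover have "(\<Prod>b\<in>Basis. (\<integral>\<^sup>+t. f1 b t \<partial>lborel)) \<noteq> top"
      using fin1 by (simp only: ennreal_prod_eq_top) auto
    ultimately show ?thesis by (simp add: less_top)
  qed
  have I2: "(\<integral>\<^sup>+x. (\<Prod>b\<in>Basis. f2 b (x \<bullet> b)) \<partial>lborel) < \<infinity>"
  proof -
    have "(\<integral>\<^sup>+x. (\<Prod>b\<in>Basis. f2 b (x \<bullet> b)) \<partial>lborel) = (\<Prod>b\<in>Basis. (\<integral>\<^sup>+t. f2 b t \<partial>lborel))"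
      by (rule nn_integral_lborel_prod[OF m2]) (simp add: f2_def)
    moreover have "(\<Prod>b\<in>Basis. (\<integral>\<^sup>+t. f2 b t \<partial>lborel)) \<noteq> top"
      using fin2 by (simp only: ennreal_prod_eq_top) auto
    ultimately show ?thesis by (simp add: less_top)
  qed
  have E1: "(\<Prod>b\<in>Basis. f1 b (x \<bullet> b)) = ennreal (W x)" for x
    unfolding f1_def W_def by (rule prod_ennreal) (simp add: w_pos less_imp_le)
  have E2: "(\<Prod>b\<in>Basis. f2 b (x \<bullet> b)) = ennreal (W x * (norm (h (u - x \<bullet> b0)))^2)" for x
  proof -
    have "(\<Prod>b\<in>Basis. f2 b (x \<bullet> b)) = f2 b0 (x \<bullet> b0) * (\<Prod>b\<in>Basis - {b0}. f2 b (x \<bullet> b))"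
      using b0 by (simp add: prod.remove)
    also have "(\<Prod>b\<in>Basis - {b0}. f2 b (x \<bullet> b)) = (\<Prod>b\<in>Basis - {b0}. ennreal (w (x \<bullet> b)))"
      by (intro prod.cong) (auto simp: f2_def)
    also have "\<dots> = ennreal (\<Prod>b\<in>Basis - {b0}. w (x \<bullet> b))"
      by (rule prod_ennreal) (simp add: w_pos less_imp_le)
    also have "f2 b0 (x \<bullet> b0) * \<dots> = ennreal (w (x \<bullet> b0) * (norm (h (u - x \<bullet> b0)))^2 * (\<Prod>b\<in>Basis - {b0}. w (x \<bullet> b)))"
      by (simp add: f2_def ennreal_mult' w_pos less_imp_le)
    also have "w (x \<bullet> b0) * (norm (h (u - x \<bullet> b0)))^2 * (\<Prod>b\<in>Basis - {b0}. w (x \<bullet> b)) = W x * (norm (h (u - x \<bullet> b0)))^2"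
      using b0 unfolding W_def by (simp add: prod.remove)
    finally show ?thesis .
  qed
  show ?thesis
    unfolding integrable_iff_bounded
  proof
    show "(\<lambda>x. P x * h (u - x \<bullet> b0)) \<in> borel_measurable lborel" by measurable
    have "(\<integral>\<^sup>+x. ennreal (norm (P x * h (u - x \<bullet> b0))) \<partial>lborel)
        \<le> (\<integral>\<^sup>+x. ennreal C * (ennreal (W x) + ennreal (W x * (norm (h (u - x \<bullet> b0)))^2)) \<partial>lborel)"
    proof (intro nn_integral_mono)
      fix x
      have hn: "norm (h (u - x \<bullet> b0)) \<le> 1 + (norm (h (u - x \<bullet> b0)))^2"
        by (rule le_sq)
      have "norm (P x * h (u - x \<bullet> b0)) \<le> C * W x * (1 + (norm (h (u - x \<bullet> b0)))^2)"
        unfolding norm_mult W_def w_def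
        by (rule mult_mono[OF Pb hn]) (use C0 W_pos[of x] in \<open>simp_all add: W_def w_def\<close>)
      also have "\<dots> = C * (W x + W x * (norm (h (u - x \<bullet> b0)))^2)" by (simp add: algebra_simps)
      finally have "ennreal (norm (P x * h (u - x \<bullet> b0))) \<le> ennreal (C * (W x + W x * (norm (h (u - x \<bullet> b0)))^2))"
        by (rule ennreal_leI)
      also have "\<dots> = ennreal C * (ennreal (W x) + ennreal (W x * (norm (h (u - x \<bullet> b0)))^2))"
        using W_pos[of x] C0 by (simp add: ennreal_mult' ennreal_plus[symmetric] less_imp_le)
      finally show "ennreal (norm (P x * h (u - x \<bullet> b0))) \<le> ennreal C * (ennreal (W x) + ennreal (W x * (norm (h (u - x \<bullet> b0)))^2))" .
    qed
    also have "\<dots> = ennreal C * ((\<integral>\<^sup>+x. ennreal (W x) \<partial>lborel) + (\<integral>\<^sup>+x. ennreal (W x * (norm (h (u - x \<bullet> b0)))^2) \<partial>lborel))"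
      unfolding W_def by (subst nn_integral_cmult) (auto simp: nn_integral_add)
    also have "\<dots> < \<infinity>"
      using I1 I2 unfolding E1 E2 by (simp add: ennreal_mult_less_top)
    finally show "(\<integral>\<^sup>+x. ennreal (norm (P x * h (u - x \<bullet> b0))) \<partial>lborel) < \<infinity>" .
  qed
qed

lemma wbound:
  fixes x :: "'a::euclidean_space" and z :: complex
  assumes "(1 + norm x)^(2 * DIM('a)) * norm z \<le> C"
  shows "norm z \<le> C * (\<Prod>b\<in>Basis. inverse (1 + (x \<bullet> b)^2))"
proof -
  define P where "P = (\<Prod>b\<in>Basis. (1 + (x \<bullet> b)^2))"
  have P1: "1 \<le> P" unfolding P_def by (intro prod_ge_1) simp
  have "P \<le> (\<Prod>b\<in>(Basis::'a set). (1 + norm x)^2)"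
    unfolding P_def
  proof (intro prod_mono conjI)
    fix b :: 'a assume b: "b \<in> Basis"
    show "0 \<le> 1 + (x \<bullet> b)^2" by simp
    have "\<bar>x \<bullet> b\<bar> \<le> norm x" using b by (rule Basis_le_norm)
    then have "(x \<bullet> b)^2 \<le> (norm x)^2" by (metis abs_ge_zero power2_abs power_mono)
    also have "\<dots> \<le> (1 + norm x)^2 - 1" by (simp add: power2_eq_square algebra_simps)
    finally show "1 + (x \<bullet> b)^2 \<le> (1 + norm x)^2" by simp
  qed
  also have "\<dots> = (1 + norm x)^(2 * DIM('a))" by (simp add: power_mult)
  finally have PP: "P \<le> (1 + norm x)^(2 * DIM('a))" .
  have "P * norm z \<le> C"
    using assms PP by (meson mult_right_mono norm_ge_zero order_trans)
  then have "norm z \<le> C / P" using P1 by (simp add: field_simps)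
  also have "C / P = C * (\<Prod>b\<in>Basis. inverse (1 + (x \<bullet> b)^2))"
    unfolding P_def by (simp add: prod_inversef[symmetric] divide_inverse)
  finally show ?thesis .
qed



theorem mainTheorem2:
  fixes lam mu u :: real and k :: "real^4 \<Rightarrow> complex" and h :: "real \<Rightarrow> complex"
  assumes "lam \<noteq> 0" and "schwartz k"
    and "h \<in> borel_measurable lborel" and "integrable lborel (\<lambda>v. (norm (h v))^2)"
  shows "(piK lam mu (\<lambda>x. complex_of_real (x$1) * k x) h u
           = (\<i> / complex_of_real lam) * (pi_X3 lam (piK lam mu k h) u - piK lam mu k (pi_X3 lam h) u))
     \<and> (\<exists>D. ((\<lambda>m. piK lam m k h u) has_vector_derivative D) (at mu) \<and>
           piK lam mu (\<lambda>x. complex_of_real (x$2) * k x) h u = (2 * complex_of_real lam / \<i>) * D)"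
proof -
  note lam = assms(1)
  note h = assms(3) and h2 = assms(4)
  have hb[measurable]: "h \<in> borel_measurable borel" using h by simp
  have "\<exists>C. \<forall>x. (1 + norm x)^9 * norm (iter_partial [] k x) \<le> C"
    using assms(2) unfolding schwartz_def by blast
  then obtain C where C: "\<And>x. (1 + norm x)^9 * norm (k x) \<le> C" by auto
  have "continuous_on UNIV k"
    using assms(2) unfolding schwartz_def
    by (metis iter_partial.simps(1) differentiable_imp_continuous_within continuous_at_imp_continuous_on)
  then have km[measurable]: "k \<in> borel_measurable borel" by (rule borel_measurable_continuous_onI)
  define th where "th x = - lam * x$4 + lam * x$3 * (u - x$1) - lam/2 * x$2 * (u - x$1)^2" for x :: "real^4"
  define a where "a x = x$2 / (2 * lam)" for x :: "real^4"
  define E where "E m x = exp (\<i> * complex_of_real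
                (m / (2 * lam) * x$2 - lam * x$4 + lam * x$3 * (u - x$1)
                 - lam / 2 * x$2 * (u - x$1)^2))" for m and x :: "real^4"
  have E_alt: "E m x = exp (\<i> * (of_real m * of_real (a x) + of_real (th x)))" for m x
    unfolding E_def a_def th_def by (simp add: algebra_simps)
  have normE: "norm (E m x) = 1" for m x
    unfolding E_def by (rule norm_exp_i_times)
  have Em[measurable]: "(\<lambda>x. E m x) \<in> borel_measurable borel" for m
    unfolding E_def by (intro borel_measurable_continuous_onI continuous_intros)
  have piK_eq: "piK lam m g f u = (\<integral>x. g x * E m x * f (u - x$1) \<partial>lborel)" for m g f
    unfolding piK_def E_def by simp
  have ax: "axis (1::4) (1::real) \<in> Basis" by simp
  have INT: "integrable lborel (\<lambda>x. g x * E m x * h (u - x$1))"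
    if gm: "g \<in> borel_measurable borel" and gb: "\<And>x. (1 + norm x)^8 * norm (g x) \<le> C'" for g m C'
  proof -
    have gm'[measurable]: "g \<in> borel_measurable borel" by (rule gm)
    have "integrable lborel (\<lambda>x. (g x * E m x) * h (u - x \<bullet> axis 1 1))"
    proof (rule integrable_weighted[OF _ _ h h2 ax])
      show "(\<lambda>x. g x * E m x) \<in> borel_measurable borel" by measurable
      fix x :: "real^4"
      show "norm (g x * E m x) \<le> C' * (\<Prod>b\<in>Basis. inverse (1 + (x \<bullet> b)^2))"
        by (rule wbound) (use gb[of x] in \<open>simp add: norm_mult normE\<close>)
    qed
    then show ?thesis by (simp add: cart_eq_inner_axis)
  qed
  have bk: "(1 + norm x)^8 * norm (k x) \<le> C" for x
  proof -
    have "(1 + norm x)^8 * norm (k x) \<le> (1 + norm x)^9 * norm (k x)"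
      by (intro mult_right_mono power_increasing) auto
    then show ?thesis using C[of x] by linarith
  qed
  have bxk: "(1 + norm x)^8 * norm (complex_of_real (x$j) * k x) \<le> C" for x j
  proof -
    have "(1 + norm x)^8 * norm (complex_of_real (x$j) * k x) = ((1 + norm x)^8 * \<bar>x$j\<bar>) * norm (k x)"
      by (simp add: norm_mult)
    also have "\<dots> \<le> ((1 + norm x)^8 * (1 + norm x)) * norm (k x)"
      using component_le_norm_cart[of x j] by (intro mult_right_mono mult_left_mono) auto
    also have "\<dots> = (1 + norm x)^9 * norm (k x)" by (simp add: power_Suc2[symmetric] del: power_Suc)
    finally show ?thesis using C[of x] by linarith
  qed
  define H where "H x = h (u - x$1)" for x :: "real^4"
  have Hm[measurable]: "H \<in> borel_measurable borel" unfolding H_def by measurable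
  have INT0: "integrable lborel (\<lambda>x. k x * E m x * H x)" for m
    unfolding H_def by (rule INT[OF km bk])
  have INTj: "integrable lborel (\<lambda>x. complex_of_real (x$j) * k x * E m x * H x)" for m j
    unfolding H_def by (rule INT[OF _ bxk]) measurable
  show ?thesis
  proof
    define I0 where "I0 = (\<integral>x. k x * E mu x * H x \<partial>lborel)"
    define I1 where "I1 = (\<integral>x. complex_of_real (x$1) * k x * E mu x * H x \<partial>lborel)"
    have L: "piK lam mu (\<lambda>x. complex_of_real (x$1) * k x) h u = I1"
      unfolding piK_eq I1_def H_def ..
    have R1: "pi_X3 lam (piK lam mu k h) u = - \<i> * of_real lam * of_real u * I0"
      unfolding pi_X3_def piK_eq I0_def H_def ..
    have "piK lam mu k (pi_X3 lam h) u
        = (\<integral>x. (- \<i> * of_real lam * of_real u) * (k x * E mu x * H x)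
               - (- \<i> * of_real lam) * (complex_of_real (x$1) * k x * E mu x * H x) \<partial>lborel)"
      unfolding piK_eq pi_X3_def H_def by (intro Bochner_Integration.integral_cong refl) (simp add: algebra_simps)
    also have "\<dots> = (- \<i> * of_real lam * of_real u) * I0 - (- \<i> * of_real lam) * I1"
      unfolding I0_def I1_def
      by (subst Bochner_Integration.integral_diff[OF integrable_mult_right[OF INT0[of mu]] integrable_mult_right[OF INTj[of 1 mu]]])
         (simp only: integral_mult_right_zero)
    finally have R2: "piK lam mu k (pi_X3 lam h) u = (- \<i> * of_real lam * of_real u) * I0 - (- \<i> * of_real lam) * I1" .
    show "piK lam mu (\<lambda>x. complex_of_real (x$1) * k x) h u
           = (\<i> / complex_of_real lam) * (pi_X3 lam (piK lam mu k h) u - piK lam mu k (pi_X3 lam h) u)"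
      unfolding L R1 R2 using lam by (simp add: field_simps)
  next
    show "\<exists>D. ((\<lambda>m. piK lam m k h u) has_vector_derivative D) (at mu) \<and>
           piK lam mu (\<lambda>x. complex_of_real (x$2) * k x) h u = (2 * complex_of_real lam / \<i>) * D"
    proof (intro exI conjI)
      define J where "J x = complex_of_real (x$2) * k x * E mu x * H x" for x
      have intJ: "integrable lborel J" unfolding J_def by (rule INTj)
      have Jm[measurable]: "J \<in> borel_measurable borel" unfolding J_def by measurable
      define D where "D = \<i> / (2 * of_real lam) * (\<integral>x. J x \<partial>lborel)"
      show "piK lam mu (\<lambda>x. complex_of_real (x$2) * k x) h u = (2 * complex_of_real lam / \<i>) * D"
        unfolding D_def piK_eq J_def H_def using lam by (simp add: field_simps)
      define Q where "Q m x = k x * H x * ((E m x - E mu x) / of_real (m - mu))" for m x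
      define f where "f x = k x * H x * (\<i> * of_real (a x) * E mu x)" for x
      have fm[measurable]: "f \<in> borel_measurable borel" unfolding f_def a_def by measurable
      have Qm[measurable]: "Q m \<in> borel_measurable borel" for m unfolding Q_def by measurable
      have fD: "(\<integral>x. f x \<partial>lborel) = D"
      proof -
        have "(\<integral>x. f x \<partial>lborel) = (\<integral>x. \<i> / (2 * of_real lam) * J x \<partial>lborel)"
          unfolding f_def J_def a_def by (intro Bochner_Integration.integral_cong refl) (simp add: field_simps)
        then show ?thesis unfolding D_def by simp
      qed
      have quot: "(piK lam m k h u - piK lam mu k h u) / of_real (m - mu) = (\<integral>x. Q m x \<partial>lborel)" if "m \<noteq> mu" for m
      proof -
        have "piK lam m k h u - piK lam mu k h u = (\<integral>x. k x * E m x * H x - k x * E mu x * H x \<partial>lborel)"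
          unfolding piK_eq H_def
          by (rule Bochner_Integration.integral_diff[symmetric, OF INT0 INT0, unfolded H_def])
        then have "(piK lam m k h u - piK lam mu k h u) / of_real (m - mu)
            = (\<integral>x. (k x * E m x * H x - k x * E mu x * H x) / of_real (m - mu) \<partial>lborel)"
          by simp
        also have "\<dots> = (\<integral>x. Q m x \<partial>lborel)"
          unfolding Q_def by (intro Bochner_Integration.integral_cong refl) (simp add: field_simps)
        finally show ?thesis .
      qed
      have pw: "((\<lambda>m. (E m x - E mu x) / of_real (m - mu)) \<longlongrightarrow> \<i> * of_real (a x) * E mu x) (at mu)" for x
      proof -
        have "((\<lambda>z. exp (\<i> * (z * of_real (a x) + of_real (th x)))) has_field_derivative
                 exp (\<i> * (of_real mu * of_real (a x) + of_real (th x))) * (\<i> * of_real (a x))) (at (of_real mu))"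
          by (auto intro!: derivative_eq_intros)
        from has_vector_derivative_real_field[OF this]
        have "((\<lambda>m. E m x) has_vector_derivative \<i> * of_real (a x) * E mu x) (at mu)"
          unfolding E_alt by (simp add: ac_simps)
        then show ?thesis unfolding hvd_iff .
      qed
      have bnd: "norm (Q m x) \<le> norm (J x) / (2 * \<bar>lam\<bar>)" if "m \<noteq> mu" for m x
      proof -
        have "E m x - E mu x = E mu x * (iexp ((m - mu) * a x) - 1)"
          unfolding E_alt by (simp add: exp_add[symmetric] algebra_simps)
        then have "norm (E m x - E mu x) \<le> \<bar>m - mu\<bar> * \<bar>a x\<bar>"
          using iexp_le[of "(m - mu) * a x"] by (simp add: norm_mult normE abs_mult)
        moreover have "norm ((E m x - E mu x) / of_real (m - mu)) = norm (E m x - E mu x) / \<bar>m - mu\<bar>"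
          by (simp add: norm_divide del: of_real_diff)
        ultimately have "norm ((E m x - E mu x) / of_real (m - mu)) \<le> \<bar>a x\<bar>"
          using that by (simp add: divide_le_eq mult.commute)
        then have "norm (Q m x) \<le> norm (k x) * norm (H x) * \<bar>a x\<bar>"
          unfolding Q_def norm_mult by (intro mult_left_mono) auto
        also have "\<dots> = norm (J x) / (2 * \<bar>lam\<bar>)"
          unfolding J_def a_def by (simp add: norm_mult normE abs_mult field_simps)
        finally show ?thesis .
      qed
      show "((\<lambda>m. piK lam m k h u) has_vector_derivative D) (at mu)"
        unfolding hvd_iff tendsto_at_iff_sequentially
      proof (intro allI impI)
        fix X :: "nat \<Rightarrow> real"
        assume X: "\<forall>i. X i \<in> UNIV - {mu}" and Xl: "X \<longlonglongrightarrow> mu"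
        have "(\<lambda>n. (\<integral>x. Q (X n) x \<partial>lborel)) \<longlonglongrightarrow> (\<integral>x. f x \<partial>lborel)"
        proof (rule integral_dominated_convergence[where w = "\<lambda>x. norm (J x) / (2 * \<bar>lam\<bar>)"])
          show "integrable lborel (\<lambda>x. norm (J x) / (2 * \<bar>lam\<bar>))"
            using intJ by (intro integrable_divide_zero integrable_norm)
          show "AE x in lborel. (\<lambda>n. Q (X n) x) \<longlonglongrightarrow> f x"
          proof (intro AE_I2)
            fix x
            have "((\<lambda>m. (E m x - E mu x) / of_real (m - mu)) \<circ> X) \<longlonglongrightarrow> \<i> * of_real (a x) * E mu x"
              using pw[of x] X Xl unfolding tendsto_at_iff_sequentially by blast
            then show "(\<lambda>n. Q (X n) x) \<longlonglongrightarrow> f x"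
              unfolding Q_def f_def o_def by (intro tendsto_mult_left)
          qed
          show "AE x in lborel. norm (Q (X n) x) \<le> norm (J x) / (2 * \<bar>lam\<bar>)" for n
            using X bnd by auto
        qed simp_all
        then show "((\<lambda>m. (piK lam m k h u - piK lam mu k h u) / of_real (m - mu)) \<circ> X) \<longlonglongrightarrow> D"
          unfolding fD o_def using X quot by simp
      qed
    qed
  qed
qed

end
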